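(* For any two stationary policies $\pi,\pi'$, $$\mathrm{KL}(\mu^\pi\|\mu^{\pi'})\le\frac1{1-\gamma}\mathcal H(\pi\|\pi').$$
   Context: Discounted MDP with finite state space $\mathcal X$, finite action space $\mathcal A$, transition kernel $P$, discount factor $\gamma\in(0,1)$ and initial distribution $\nu_0$. For a stationary policy $\pi$, $\nu^\pi(x)=(1-\gamma)\sum_{t\ge0}\gamma^t\mathbb P_\pi[X_t=x]$ (trajectory started at $X_0\sim\nu_0$, following $\pi$), $\mu^\pi(x,a)=\nu^\pi(x)\pi(a|x)$, and $\mathcal H(\pi\|\pi')=\sum_x\nu^\pi(x)\mathrm{KL}(\pi(\cdot|x)\|\pi'(\cdot|x))$. *)

theory Defs
  imports Complex_Main "HOL-Library.Extended_Real"
begin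

definition is_dist :: "('i::finite \<Rightarrow> real) \<Rightarrow> bool" where
  "is_dist p \<longleftrightarrow> (\<forall>i. 0 \<le> p i) \<and> (\<Sum>i\<in>UNIV. p i) = 1"

text \<open>Stationary (stochastic) policy: pol x a = pol(a|x).\<close>
definition is_policy :: "('x::finite \<Rightarrow> 'a::finite \<Rightarrow> real) \<Rightarrow> bool" where
  "is_policy pol \<longleftrightarrow> (\<forall>x. is_dist (pol x))"

text \<open>Transition kernel: P x a y = P(y|x,a).\<close>
definition is_kernel :: "('x::finite \<Rightarrow> 'a::finite \<Rightarrow> 'x \<Rightarrow> real) \<Rightarrow> bool" where
  "is_kernel P \<longleftrightarrow> (\<forall>x a. is_dist (P x a))"

text \<open>Law of X_t: state_dist P nu0 pol t x = Prob_pi[X_t = x], with X_0 ~ nu0.\<close>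
primrec state_dist :: "('x::finite \<Rightarrow> 'a::finite \<Rightarrow> 'x \<Rightarrow> real) \<Rightarrow> ('x \<Rightarrow> real)
    \<Rightarrow> ('x \<Rightarrow> 'a \<Rightarrow> real) \<Rightarrow> nat \<Rightarrow> 'x \<Rightarrow> real" where
  "state_dist P nu0 pol 0 = nu0"
| "state_dist P nu0 pol (Suc t) =
     (\<lambda>y. \<Sum>x\<in>UNIV. \<Sum>a\<in>UNIV. state_dist P nu0 pol t x * pol x a * P x a y)"

definition state_occ :: "('x::finite \<Rightarrow> 'a::finite \<Rightarrow> 'x \<Rightarrow> real) \<Rightarrow> ('x \<Rightarrow> real)
    \<Rightarrow> real \<Rightarrow> ('x \<Rightarrow> 'a \<Rightarrow> real) \<Rightarrow> 'x \<Rightarrow> real" where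
  "state_occ P nu0 \<gamma> pol x = (1 - \<gamma>) * (\<Sum>t. \<gamma> ^ t * state_dist P nu0 pol t x)"

definition sa_occ :: "('x::finite \<Rightarrow> 'a::finite \<Rightarrow> 'x \<Rightarrow> real) \<Rightarrow> ('x \<Rightarrow> real)
    \<Rightarrow> real \<Rightarrow> ('x \<Rightarrow> 'a \<Rightarrow> real) \<Rightarrow> 'x \<times> 'a \<Rightarrow> real" where
  "sa_occ P nu0 \<gamma> pol = (\<lambda>(x, a). state_occ P nu0 \<gamma> pol x * pol x a)"

definition KL :: "('i::finite \<Rightarrow> real) \<Rightarrow> ('i \<Rightarrow> real) \<Rightarrow> ereal" where
  "KL p q = (if \<exists>i. p i > 0 \<and> q i = 0 then \<infinity>
             else ereal (\<Sum>i\<in>{i. p i > 0}. p i * ln (p i / q i)))"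

text \<open>Conditional relative entropy H(pol||pol') = sum_x nu^pol(x) KL(pol(.|x) || pol'(.|x))
  (with 0 * infinity = 0).\<close>
definition cond_KL :: "('x::finite \<Rightarrow> 'a::finite \<Rightarrow> 'x \<Rightarrow> real) \<Rightarrow> ('x \<Rightarrow> real)
    \<Rightarrow> real \<Rightarrow> ('x \<Rightarrow> 'a \<Rightarrow> real) \<Rightarrow> ('x \<Rightarrow> 'a \<Rightarrow> real) \<Rightarrow> ereal" where
  "cond_KL P nu0 \<gamma> pol pol' = (\<Sum>x\<in>UNIV. ereal (state_occ P nu0 \<gamma> pol x) * KL (pol x) (pol' x))"

end

theory Submission
  imports Defs
begin


definition lsf :: "real \<Rightarrow> real \<Rightarrow> real" where
  "lsf a b = (if 0 < a then a * ln (a / b) else 0)"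

lemma lsf_add:
  fixes a b c d :: real
  assumes "0\<le>a" "0\<le>b" "0\<le>c" "0\<le>d" "a>0 \<Longrightarrow> b>0" "c>0 \<Longrightarrow> d>0"
  shows "lsf (a+c) (b+d) \<le> lsf a b + lsf c d"
proof (cases "a > 0")
  case ha: True
  show ?thesis
  proof (cases "c > 0")
    case hc: True
    have hb: "b>0" "d > 0" using assms ha hc by auto
    have l1: "ln (b*(a+c)/(a*(b+d))) \<le> b*(a+c)/(a*(b+d)) - 1"
      by (rule ln_le_minus_one) (use ha hb hc in auto)
    have l2: "ln (d*(a+c)/(c*(b+d))) \<le> d*(a+c)/(c*(b+d)) - 1"
      by (rule ln_le_minus_one) (use ha hb hc in auto)
    have m1': "a * ln (b*(a+c)/(a*(b+d))) \<le> a * (b*(a+c)/(a*(b+d)) - 1)"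
      by (rule mult_left_mono[OF l1]) (use ha in simp)
    have m2': "c * ln (d*(a+c)/(c*(b+d))) \<le> c * (d*(a+c)/(c*(b+d)) - 1)"
      by (rule mult_left_mono[OF l2]) (use hc in simp)
    have bd: "b + d \<noteq> 0" using hb by simp
    have q1: "a * (b*(a+c)/(a*(b+d)) - 1) = b*(a+c)/(b+d) - a" using ha by (simp add: right_diff_distrib)
    have q2: "c * (d*(a+c)/(c*(b+d)) - 1) = d*(a+c)/(b+d) - c" using hc by (simp add: right_diff_distrib)
    have m1: "a * ln (b*(a+c)/(a*(b+d))) \<le> b*(a+c)/(b+d) - a" using m1' q1 by simp
    have m2: "c * ln (d*(a+c)/(c*(b+d))) \<le> d*(a+c)/(b+d) - c" using m2' q2 by simp
    have e0: "(b+d)*(a+c)/(b+d) = b*(a+c)/(b+d) + d*(a+c)/(b+d)"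
      by (simp only: distrib_right add_divide_distrib)
    have e: "b*(a+c)/(b+d) + d*(a+c)/(b+d) = a + c" using e0 bd by simp
    have L1: "ln (b*(a+c)/(a*(b+d))) = ln b + ln (a+c) - ln a - ln (b+d)"
      using ha hb hc by (simp add: ln_div ln_mult)
    have L2: "ln (d*(a+c)/(c*(b+d))) = ln d + ln (a+c) - ln c - ln (b+d)"
      using ha hb hc by (simp add: ln_div ln_mult)
    have "(a+c) * ln ((a+c)/(b+d)) \<le> a * ln (a/b) + c * ln (c/d)"
    proof -
      have "(a+c) * ln ((a+c)/(b+d)) = (a+c) * (ln (a+c) - ln (b+d))" using ha hb hc by (simp add: ln_div)
      moreover have "a * ln (a/b) = a * (ln a - ln b)" using ha hb by (simp add: ln_div)
      moreover have "c * ln (c/d) = c * (ln c - ln d)" using hc hb by (simp add: ln_div)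
      ultimately show ?thesis using m1 m2 e unfolding L1 L2 by (simp add: algebra_simps)
    qed
    then show ?thesis using ha hc by (simp add: lsf_def)
  next
    case False
    then have c0: "c = 0" using assms by simp
    have hb: "b > 0" using assms ha by simp
    have "a/(b+d) \<le> a/b" by (rule divide_left_mono) (use ha hb assms in auto)
    then have "ln (a/(b+d)) \<le> ln (a/b)" using ha hb assms by (simp add: ln_le_cancel_iff add_pos_nonneg)
    then have "a * ln (a/(b+d)) \<le> a * ln (a/b)" using ha by (simp add: mult_left_mono)
    then show ?thesis using ha c0 by (simp add: lsf_def)
  qed
next
  case False
  then have a0: "a = 0" using assms by simp
  show ?thesis
  proof (cases "c > 0")
    case True
    have hd: "d > 0" using assms True by simp
    have "c/(b+d) \<le> c/d" by (rule divide_left_mono) (use True hd assms in auto)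
    then have "ln (c/(b+d)) \<le> ln (c/d)" using True hd assms by (simp add: ln_le_cancel_iff add_nonneg_pos)
    then have "c * ln (c/(b+d)) \<le> c * ln (c/d)" using True by (simp add: mult_left_mono)
    then show ?thesis using True a0 by (simp add: lsf_def)
  next
    case False
    then show ?thesis using a0 assms by (simp add: lsf_def)
  qed
qed

lemma sum_pos_imp:
  fixes a b :: "'i \<Rightarrow> real"
  assumes "finite S" "\<And>i. i\<in>S \<Longrightarrow> 0 \<le> a i \<and> 0 \<le> b i \<and> (a i > 0 \<longrightarrow> b i > 0)"
    "(\<Sum>i\<in>S. a i) > 0"
  shows "(\<Sum>i\<in>S. b i) > 0"
proof -
  have "\<exists>i\<in>S. a i > 0"
  proof (rule ccontr)
    assume "\<not> ?thesis"
    then have "\<forall>i\<in>S. a i = 0" using assms(2) by force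
    then have "sum a S = 0" by simp
    with assms(3) show False by simp
  qed
  then obtain i where i: "i \<in> S" "a i > 0" by blast
  have "b i \<le> (\<Sum>i\<in>S. b i)" by (rule member_le_sum) (use i assms in auto)
  then show ?thesis using i assms by fastforce
qed

lemma lsf_sum:
  fixes a b :: "'i \<Rightarrow> real"
  assumes "finite S" "\<And>i. i\<in>S \<Longrightarrow> 0 \<le> a i \<and> 0 \<le> b i \<and> (a i > 0 \<longrightarrow> b i > 0)"
  shows "lsf (\<Sum>i\<in>S. a i) (\<Sum>i\<in>S. b i) \<le> (\<Sum>i\<in>S. lsf (a i) (b i))"
  using assms
proof (induction S rule: finite_induct)
  case empty then show ?case by (simp add: lsf_def)
next
  case (insert j S)
  have h: "\<And>i. i\<in>S \<Longrightarrow> 0 \<le> a i \<and> 0 \<le> b i \<and> (a i > 0 \<longrightarrow> b i > 0)" using insert by auto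
  have pos: "(\<Sum>i\<in>S. b i) > 0" if "(\<Sum>i\<in>S. a i) > 0"
    by (rule sum_pos_imp[OF insert(1) h that])
  have "lsf (\<Sum>i\<in>insert j S. a i) (\<Sum>i\<in>insert j S. b i)
      = lsf (a j + (\<Sum>i\<in>S. a i)) (b j + (\<Sum>i\<in>S. b i))" using insert by simp
  also have "\<dots> \<le> lsf (a j) (b j) + lsf (\<Sum>i\<in>S. a i) (\<Sum>i\<in>S. b i)"
    by (rule lsf_add) (use insert.prems h pos in \<open>auto intro!: sum_nonneg\<close>)
  also have "\<dots> \<le> lsf (a j) (b j) + (\<Sum>i\<in>S. lsf (a i) (b i))"
    using insert.IH h by simp
  finally show ?case using insert by simp
qed

lemma sd_nonneg:
  assumes "is_kernel P" "is_dist nu0" "is_policy pol"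
  shows "0 \<le> state_dist P nu0 pol t x"
proof (induction t arbitrary: x)
  case 0 then show ?case using assms by (simp add: is_dist_def)
next
  case (Suc t)
  have "\<And>x a y. 0 \<le> pol x a" "\<And>x a y. 0 \<le> P x a y"
    using assms by (auto simp: is_policy_def is_kernel_def is_dist_def)
  then show ?case using Suc by (auto intro!: sum_nonneg)
qed

lemma sd_sum:
  assumes "is_kernel P" "is_dist nu0" "is_policy pol"
  shows "(\<Sum>x\<in>UNIV. state_dist P nu0 pol t x) = 1"
proof (induction t)
  case 0 then show ?case using assms by (simp add: is_dist_def)
next
  case (Suc t)
  have "(\<Sum>y\<in>UNIV. state_dist P nu0 pol (Suc t) y)
      = (\<Sum>x\<in>UNIV. \<Sum>a\<in>UNIV. state_dist P nu0 pol t x * pol x a * (\<Sum>y\<in>UNIV. P x a y))"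
  proof -
    have "(\<Sum>y\<in>UNIV. state_dist P nu0 pol (Suc t) y)
      = (\<Sum>y\<in>UNIV. \<Sum>x\<in>UNIV. \<Sum>a\<in>UNIV. state_dist P nu0 pol t x * pol x a * P x a y)" by simp
    also have "\<dots> = (\<Sum>x\<in>UNIV. \<Sum>y\<in>UNIV. \<Sum>a\<in>UNIV. state_dist P nu0 pol t x * pol x a * P x a y)"
      by (rule sum.swap)
    also have "\<dots> = (\<Sum>x\<in>UNIV. \<Sum>a\<in>UNIV. \<Sum>y\<in>UNIV. state_dist P nu0 pol t x * pol x a * P x a y)"
      by (rule sum.cong[OF refl], rule sum.swap)
    also have "\<dots> = (\<Sum>x\<in>UNIV. \<Sum>a\<in>UNIV. state_dist P nu0 pol t x * pol x a * (\<Sum>y\<in>UNIV. P x a y))"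
      by (simp only: sum_distrib_left)
    finally show ?thesis .
  qed
  also have "\<dots> = (\<Sum>x\<in>UNIV. state_dist P nu0 pol t x * (\<Sum>a\<in>UNIV. pol x a))"
    using assms by (simp add: is_kernel_def is_dist_def sum_distrib_left)
  also have "\<dots> = 1" using assms Suc by (simp add: is_policy_def is_dist_def)
  finally show ?case .
qed

lemma sd_le1:
  assumes "is_kernel P" "is_dist nu0" "is_policy pol"
  shows "state_dist P nu0 pol t x \<le> 1"
proof -
  have "state_dist P nu0 pol t x \<le> (\<Sum>x\<in>UNIV. state_dist P nu0 pol t x)"
    by (rule member_le_sum) (use sd_nonneg[OF assms] in auto)
  then show ?thesis using sd_sum[OF assms] by simp
qed

lemma sd_summable:
  assumes "is_kernel P" "is_dist nu0" "is_policy pol" "0 \<le> \<gamma>" "\<gamma> < 1"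
  shows "summable (\<lambda>t. \<gamma> ^ t * state_dist P nu0 pol t x)"
proof (rule summable_comparison_test[where g="\<lambda>t. \<gamma>^t"])
  show "\<exists>N. \<forall>n\<ge>N. norm (\<gamma> ^ n * state_dist P nu0 pol n x) \<le> \<gamma> ^ n"
    using sd_nonneg[OF assms(1-3)] sd_le1[OF assms(1-3)] assms(4)
    by (auto intro!: mult_left_le simp: abs_mult)
  show "summable (\<lambda>n. \<gamma> ^ n)" using assms by (simp add: summable_geometric)
qed

lemma occ_fix:
  assumes "is_kernel P" "is_dist nu0" "is_policy pol" "0 \<le> \<gamma>" "\<gamma> < 1"
  shows "state_occ P nu0 \<gamma> pol y = (1-\<gamma>) * nu0 y + (1-\<gamma>) * \<gamma> *
     (\<Sum>x\<in>UNIV. \<Sum>a\<in>UNIV. (\<Sum>t. \<gamma> ^ t * state_dist P nu0 pol t x) * pol x a * P x a y)"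
proof -
  define d where "d = state_dist P nu0 pol"
  have S: "\<And>x. summable (\<lambda>t. \<gamma> ^ t * d t x)" using sd_summable[OF assms] d_def by simp
  have "(\<Sum>t. \<gamma> ^ t * d t y) = (\<Sum>t. \<gamma> ^ Suc t * d (Suc t) y) + d 0 y"
    using suminf_split_head[OF S[of y]] by simp
  also have "(\<Sum>t. \<gamma> ^ Suc t * d (Suc t) y)
     = (\<Sum>t. \<gamma> * (\<Sum>x\<in>UNIV. \<Sum>a\<in>UNIV. (\<gamma> ^ t * d t x) * (pol x a * P x a y)))"
    by (simp add: d_def sum_distrib_left mult_ac)
  also have "\<dots> = \<gamma> * (\<Sum>t. (\<Sum>x\<in>UNIV. \<Sum>a\<in>UNIV. (\<gamma> ^ t * d t x) * (pol x a * P x a y)))"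
    by (rule suminf_mult) (intro summable_sum summable_mult2 S)
  also have "(\<Sum>t. (\<Sum>x\<in>UNIV. \<Sum>a\<in>UNIV. (\<gamma> ^ t * d t x) * (pol x a * P x a y)))
     = (\<Sum>x\<in>UNIV. \<Sum>t. \<Sum>a\<in>UNIV. (\<gamma> ^ t * d t x) * (pol x a * P x a y))"
    by (rule suminf_sum) (intro summable_sum summable_mult2 S)
  also have "\<dots> = (\<Sum>x\<in>UNIV. \<Sum>a\<in>UNIV. \<Sum>t. (\<gamma> ^ t * d t x) * (pol x a * P x a y))"
    by (intro sum.cong refl suminf_sum) (intro summable_mult2 S)
  also have "\<dots> = (\<Sum>x\<in>UNIV. \<Sum>a\<in>UNIV. (\<Sum>t. \<gamma> ^ t * d t x) * (pol x a * P x a y))"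
    by (intro sum.cong refl) (simp add: suminf_mult2[OF S])
  finally show ?thesis unfolding state_occ_def d_def
    by (simp add: algebra_simps)
qed


lemma sum_pairs: "(\<Sum>p\<in>UNIV. g p) = (\<Sum>x\<in>UNIV. \<Sum>a\<in>UNIV. g (x,a))"
  using sum.cartesian_product'[of g UNIV UNIV] by simp

lemma occ_nonneg:
  assumes "is_kernel P" "is_dist nu0" "is_policy pol" "0 \<le> \<gamma>" "\<gamma> < 1"
  shows "0 \<le> state_occ P nu0 \<gamma> pol x"
  unfolding state_occ_def using assms sd_nonneg[OF assms(1-3)] sd_summable[OF assms]
  by (auto intro!: mult_nonneg_nonneg suminf_nonneg)

lemma occ_pos:
  assumes "is_kernel P" "is_dist nu0" "is_policy pol" "0 < \<gamma>" "\<gamma> < 1"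
  shows "0 < state_occ P nu0 \<gamma> pol x \<longleftrightarrow> (\<exists>t. 0 < state_dist P nu0 pol t x)"
proof -
  have S: "summable (\<lambda>t. \<gamma> ^ t * state_dist P nu0 pol t x)" using sd_summable[OF assms(1-3)] assms by simp
  have "0 < (\<Sum>t. \<gamma> ^ t * state_dist P nu0 pol t x) \<longleftrightarrow> (\<exists>t. 0 < \<gamma> ^ t * state_dist P nu0 pol t x)"
    by (rule suminf_pos_iff[OF S]) (use assms sd_nonneg[OF assms(1-3)] in simp)
  then show ?thesis unfolding state_occ_def using assms by (simp add: zero_less_mult_iff)
qed

lemma occ_fix':
  assumes "is_kernel P" "is_dist nu0" "is_policy pol" "0 \<le> \<gamma>" "\<gamma> < 1"
  shows "state_occ P nu0 \<gamma> pol y = (1-\<gamma>) * nu0 y +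
     (\<Sum>p\<in>UNIV. \<gamma> * (state_occ P nu0 \<gamma> pol (fst p) * pol (fst p) (snd p)) * P (fst p) (snd p) y)"
proof -
  define S where "S x = (\<Sum>t. \<gamma> ^ t * state_dist P nu0 pol t x)" for x
  have e: "\<gamma> * (state_occ P nu0 \<gamma> pol x * pol x a) * P x a y = (1-\<gamma>)*\<gamma>*(S x * pol x a * P x a y)" for x a
    unfolding state_occ_def S_def by (simp only: mult_ac)
  have "(\<Sum>p\<in>UNIV. \<gamma> * (state_occ P nu0 \<gamma> pol (fst p) * pol (fst p) (snd p)) * P (fst p) (snd p) y)
     = (\<Sum>x\<in>UNIV. \<Sum>a\<in>UNIV. \<gamma> * (state_occ P nu0 \<gamma> pol x * pol x a) * P x a y)"
    by (simp only: sum_pairs fst_conv snd_conv)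
  also have "\<dots> = (1-\<gamma>)*\<gamma>*(\<Sum>x\<in>UNIV. \<Sum>a\<in>UNIV. S x * pol x a * P x a y)"
    by (simp only: e sum_distrib_left)
  finally show ?thesis using occ_fix[OF assms, of y] unfolding S_def by simp
qed

lemma sum_pos_ex:
  fixes f :: "'i \<Rightarrow> real"
  assumes "0 < sum f S" shows "\<exists>i\<in>S. 0 < f i"
proof (rule ccontr)
  assume "\<not> ?thesis"
  then have "\<forall>i\<in>S. f i \<le> 0" by (simp add: not_less)
  then have "sum f S \<le> 0" by (simp add: sum_nonpos)
  with assms show False by simp
qed

lemma prod2_pos:
  fixes a b :: real
  assumes "0 \<le> a" "0 \<le> b" "0 < a * b" shows "0 < a \<and> 0 < b"
  using assms by (auto simp: zero_less_mult_iff)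

lemma prod3_pos:
  fixes a b c :: real
  assumes "0 \<le> a" "0 \<le> b" "0 \<le> c" "0 < a * b * c" shows "0 < a \<and> 0 < b \<and> 0 < c"
  using assms by (auto simp: zero_less_mult_iff)

theorem mainTheorem9:
  fixes P :: "'x::finite \<Rightarrow> 'a::finite \<Rightarrow> 'x \<Rightarrow> real"
    and nu0 :: "'x \<Rightarrow> real"
    and \<gamma> :: real
    and pol pol' :: "'x \<Rightarrow> 'a \<Rightarrow> real"
  assumes "0 < \<gamma>" and "\<gamma> < 1"
    and "is_kernel P" and "is_dist nu0"
    and "is_policy pol" and "is_policy pol'"
  shows "KL (sa_occ P nu0 \<gamma> pol) (sa_occ P nu0 \<gamma> pol')
           \<le> ereal (1 / (1 - \<gamma>)) * cond_KL P nu0 \<gamma> pol pol'"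
proof -
  note g = assms(1,2)
  define \<nu> where "\<nu> = state_occ P nu0 \<gamma> pol"
  define \<nu>' where "\<nu>' = state_occ P nu0 \<gamma> pol'"
  have \<nu>0: "\<And>x. 0 \<le> \<nu> x" unfolding \<nu>_def by (rule occ_nonneg) (use assms in auto)
  have \<nu>0': "\<And>x. 0 \<le> \<nu>' x" unfolding \<nu>'_def by (rule occ_nonneg) (use assms in auto)
  have p0: "\<And>x a. 0 \<le> pol x a" "\<And>x a. 0 \<le> pol' x a" "\<And>x a y. 0 \<le> P x a y"
    using assms by (auto simp: is_policy_def is_kernel_def is_dist_def)
  have ps: "\<And>x. (\<Sum>a\<in>UNIV. pol x a) = 1" "\<And>x a. (\<Sum>y\<in>UNIV. P x a y) = 1"
    using assms by (auto simp: is_policy_def is_kernel_def is_dist_def)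
  show ?thesis
  proof (cases "\<exists>x a. \<nu> x > 0 \<and> pol x a > 0 \<and> pol' x a = 0")
    case True
    then obtain x a where xa: "\<nu> x > 0" "pol x a > 0" "pol' x a = 0" by blast
    have "KL (pol x) (pol' x) = \<infinity>" using xa by (auto simp: KL_def)
    then have "ereal (\<nu> x) * KL (pol x) (pol' x) = \<infinity>" using xa by simp
    then have "cond_KL P nu0 \<gamma> pol pol' = \<infinity>"
      unfolding cond_KL_def \<nu>_def[symmetric] sum_Pinfty by auto
    then show ?thesis using g by simp
  next
    case False
    then have nB: "\<And>x a. \<nu> x > 0 \<Longrightarrow> pol x a > 0 \<Longrightarrow> pol' x a > 0"
      using p0(2) by (metis less_eq_real_def)
    have supp_t: "0 < state_dist P nu0 pol' t y" if "0 < state_dist P nu0 pol t y" for t y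
      using that
    proof (induction t arbitrary: y)
      case 0 then show ?case by simp
    next
      case (Suc t)
      have nn: "\<And>x a. 0 \<le> state_dist P nu0 pol t x * pol x a * P x a y"
        using sd_nonneg[OF assms(3,4,5)] p0 by simp
      obtain x where x: "0 < (\<Sum>a\<in>UNIV. state_dist P nu0 pol t x * pol x a * P x a y)"
        using sum_pos_ex[OF Suc.prems[simplified]] by blast
      obtain a where a: "0 < state_dist P nu0 pol t x * pol x a * P x a y"
        using sum_pos_ex[OF x] by blast
      have pos: "0 < state_dist P nu0 pol t x" "0 < pol x a" "0 < P x a y"
        using prod3_pos[OF sd_nonneg[OF assms(3,4,5)] p0(1) p0(3) a] by auto
      have "\<nu> x > 0" unfolding \<nu>_def using occ_pos[OF assms(3,4,5) g] pos by blast
      then have "pol' x a > 0" using nB pos by blast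
      then have "0 < state_dist P nu0 pol' t x * pol' x a * P x a y"
        using Suc.IH pos by simp
      moreover have "\<And>x a. 0 \<le> state_dist P nu0 pol' t x * pol' x a * P x a y"
        using sd_nonneg[OF assms(3,4,6)] p0 by simp
      ultimately show ?case
        by (auto intro!: sum_pos2[of UNIV x] sum_pos2[of UNIV a] sum_nonneg)
    qed
    have supp: "\<And>x. \<nu> x > 0 \<Longrightarrow> \<nu>' x > 0"
      unfolding \<nu>_def \<nu>'_def using occ_pos[OF assms(3,4,5) g] occ_pos[OF assms(3,4,6) g] supp_t
      by blast
    define kr where "kr x = (\<Sum>a\<in>UNIV. lsf (pol x a) (pol' x a))" for x
    define Hr where "Hr = (\<Sum>x\<in>UNIV. \<nu> x * kr x)"
    define m where "m p = \<nu> (fst p) * pol (fst p) (snd p)" for p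
    define m' where "m' p = \<nu>' (fst p) * pol' (fst p) (snd p)" for p
    have mm: "sa_occ P nu0 \<gamma> pol = m" "sa_occ P nu0 \<gamma> pol' = m'"
      by (auto simp: sa_occ_def m_def m'_def \<nu>_def \<nu>'_def)
    have m0: "\<And>p. 0 \<le> m p" "\<And>p. 0 \<le> m' p" using \<nu>0 \<nu>0' p0 by (auto simp: m_def m'_def)
    have mpos: "\<And>p. m p > 0 \<Longrightarrow> m' p > 0"
    proof -
      fix p assume "m p > 0"
      then have "\<nu> (fst p) > 0" "pol (fst p) (snd p) > 0"
        using prod2_pos[OF \<nu>0 p0(1)] unfolding m_def by auto
      then show "m' p > 0" using supp nB by (simp add: m'_def)
    qed
    have KLsum: "KL p q = ereal (\<Sum>i\<in>UNIV. lsf (p i) (q i))"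
      if "\<And>i. p i > 0 \<Longrightarrow> q i > 0" for p q :: "'i::finite \<Rightarrow> real"
    proof -
      have "\<not> (\<exists>i. p i > 0 \<and> q i = 0)" using that by force
      moreover have "(\<Sum>i\<in>{i. p i > 0}. p i * ln (p i / q i)) = (\<Sum>i\<in>UNIV. lsf (p i) (q i))"
        by (simp add: lsf_def sum.If_cases)
      ultimately show ?thesis by (simp add: KL_def)
    qed
    define K\<mu> where "K\<mu> = (\<Sum>p\<in>UNIV. lsf (m p) (m' p))"
    define K\<nu> where "K\<nu> = (\<Sum>x\<in>UNIV. lsf (\<nu> x) (\<nu>' x))"
    have LHS: "KL (sa_occ P nu0 \<gamma> pol) (sa_occ P nu0 \<gamma> pol') = ereal K\<mu>"
      unfolding mm K\<mu>_def by (rule KLsum) (rule mpos)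
    have RHS: "cond_KL P nu0 \<gamma> pol pol' = ereal Hr"
    proof -
      have "ereal (\<nu> x) * KL (pol x) (pol' x) = ereal (\<nu> x * kr x)" for x
      proof (cases "\<nu> x > 0")
        case True
        then have "KL (pol x) (pol' x) = ereal (kr x)" unfolding kr_def
          by (intro KLsum) (use nB in auto)
        then show ?thesis by simp
      next
        case False
        then have "\<nu> x = 0" using \<nu>0[of x] by simp
        then show ?thesis by (simp add: zero_ereal_def[symmetric])
      qed
      then show ?thesis unfolding cond_KL_def \<nu>_def[symmetric] Hr_def by simp
    qed
    have chain: "K\<mu> = K\<nu> + Hr"
    proof -
      have "(\<Sum>a\<in>UNIV. lsf (m (x,a)) (m' (x,a))) = lsf (\<nu> x) (\<nu>' x) + \<nu> x * kr x" for x
      proof (cases "\<nu> x > 0")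
        case False
        then have "\<nu> x = 0" using \<nu>0[of x] by simp
        then show ?thesis by (simp add: m_def lsf_def)
      next
        case True
        have vp: "\<nu>' x > 0" using supp True by blast
        have "lsf (m (x,a)) (m' (x,a)) = pol x a * lsf (\<nu> x) (\<nu>' x) + \<nu> x * lsf (pol x a) (pol' x a)" for a
        proof (cases "pol x a > 0")
          case False
          then have "pol x a = 0" using p0(1)[of x a] by simp
          then show ?thesis by (simp add: m_def lsf_def)
        next
          case pp: True
          have pp': "pol' x a > 0" using nB True pp by blast
          have "ln (\<nu> x * pol x a / (\<nu>' x * pol' x a)) = ln (\<nu> x / \<nu>' x) + ln (pol x a / pol' x a)"
            using True vp pp pp' by (simp add: ln_div ln_mult)
          then show ?thesis using True pp
            by (simp add: m_def m'_def lsf_def algebra_simps)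
        qed
        then have "(\<Sum>a\<in>UNIV. lsf (m (x,a)) (m' (x,a)))
             = (\<Sum>a\<in>UNIV. pol x a) * lsf (\<nu> x) (\<nu>' x) + \<nu> x * kr x"
          by (simp add: sum.distrib sum_distrib_left sum_distrib_right kr_def)
        then show ?thesis using ps by simp
      qed
      then show ?thesis unfolding K\<mu>_def K\<nu>_def Hr_def sum_pairs by (simp add: sum.distrib)
    qed
    have step: "lsf (\<nu> y) (\<nu>' y) \<le> (\<Sum>p\<in>UNIV. \<gamma> * P (fst p) (snd p) y * lsf (m p) (m' p))" for y
    proof -
      define A where "A p = \<gamma> * m p * P (fst p) (snd p) y" for p
      define B where "B p = \<gamma> * m' p * P (fst p) (snd p) y" for p
      have fx: "\<nu> y = (1-\<gamma>) * nu0 y + (\<Sum>p\<in>UNIV. A p)"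
        unfolding \<nu>_def A_def m_def \<nu>_def using occ_fix'[OF assms(3,4,5)] g by simp
      have fx': "\<nu>' y = (1-\<gamma>) * nu0 y + (\<Sum>p\<in>UNIV. B p)"
        unfolding \<nu>'_def B_def m'_def \<nu>'_def using occ_fix'[OF assms(3,4,6)] g by simp
      have AB: "\<And>p. 0 \<le> A p \<and> 0 \<le> B p \<and> (A p > 0 \<longrightarrow> B p > 0)"
      proof -
        fix p
        have "A p > 0 \<Longrightarrow> B p > 0"
        proof -
          assume "A p > 0"
          then have "m p > 0" "P (fst p) (snd p) y > 0"
            using prod3_pos[of \<gamma> "m p" "P (fst p) (snd p) y"] m0 p0 g unfolding A_def by auto
          then show "B p > 0" using mpos g unfolding B_def by simp
        qed
        then show "0 \<le> A p \<and> 0 \<le> B p \<and> (A p > 0 \<longrightarrow> B p > 0)"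
          using m0 p0 g unfolding A_def B_def by simp
      qed
      have n0: "0 \<le> (1-\<gamma>) * nu0 y" using assms by (simp add: is_dist_def)
      have "lsf (\<nu> y) (\<nu>' y) \<le> lsf ((1-\<gamma>) * nu0 y) ((1-\<gamma>) * nu0 y) + lsf (\<Sum>p\<in>UNIV. A p) (\<Sum>p\<in>UNIV. B p)"
        unfolding fx fx'
        by (rule lsf_add) (use n0 AB sum_pos_imp[of UNIV A B] in \<open>auto intro: sum_nonneg\<close>)
      also have "lsf ((1-\<gamma>) * nu0 y) ((1-\<gamma>) * nu0 y) = 0" by (simp add: lsf_def)
      also have "lsf (\<Sum>p\<in>UNIV. A p) (\<Sum>p\<in>UNIV. B p) \<le> (\<Sum>p\<in>UNIV. lsf (A p) (B p))"
        by (rule lsf_sum) (use AB in auto)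
      also have "\<dots> = (\<Sum>p\<in>UNIV. \<gamma> * P (fst p) (snd p) y * lsf (m p) (m' p))"
      proof (rule sum.cong[OF refl])
        fix p
        show "lsf (A p) (B p) = \<gamma> * P (fst p) (snd p) y * lsf (m p) (m' p)"
        proof (cases "m p > 0 \<and> P (fst p) (snd p) y > 0")
          case True
          then have "m' p > 0" using mpos by blast
          then have "A p / B p = m p / m' p" using True g unfolding A_def B_def by simp
          then show ?thesis using True g unfolding lsf_def by (simp add: A_def)
        next
          case False
          then have "m p = 0 \<or> P (fst p) (snd p) y = 0" using m0[of p] p0(3)[of "fst p" "snd p" y] by auto
          then show ?thesis by (auto simp: lsf_def A_def)
        qed
      qed
      finally show ?thesis by simp
    qed
    have "K\<nu> \<le> (\<Sum>y\<in>UNIV. \<Sum>p\<in>UNIV. \<gamma> * P (fst p) (snd p) y * lsf (m p) (m' p))"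
      unfolding K\<nu>_def by (rule sum_mono) (rule step)
    also have "\<dots> = (\<Sum>p\<in>UNIV. \<gamma> * lsf (m p) (m' p) * (\<Sum>y\<in>UNIV. P (fst p) (snd p) y))"
      by (subst sum.swap) (simp add: sum_distrib_left mult_ac)
    also have "\<dots> = \<gamma> * K\<mu>" using ps by (simp add: K\<mu>_def sum_distrib_left)
    finally have "K\<nu> \<le> \<gamma> * K\<mu>" .
    then have "(1 - \<gamma>) * K\<mu> \<le> Hr" using chain by (simp add: algebra_simps)
    then have "K\<mu> \<le> 1 / (1 - \<gamma>) * Hr" using g by (simp add: field_simps)
    then show ?thesis unfolding LHS RHS by simp
  qed
qed

end
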